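(* For $t\in(0,1)$ and $n\ge0$, $$x_n=2n+1+\alpha+\beta+tR_n,$$ $$\alpha_n=y_{n+1}-y_n+t(r_n-r_{n+1}),$$ $$\mathsf p_1(n,t)=-y_n(t)+t\,r_n(t).$$
   Context: Fix $\alpha>0$, $\beta>0$, and real $A,B$ with $A\ge0$, $A+B\ge0$, not both zero; $\theta$ is the Heaviside step function. For $t\in(0,1)$ let $w(x;t)=x^\alpha(1-x)^\beta(A+B\theta(x-t))$ on $[0,1]$, and let $P_n(x)=P_n(x;t)=x^n+\mathsf p_1(n,t)x^{n-1}+\cdots$ be the monic orthogonal polynomials: $\int_0^1P_iP_jw\,dx=h_i(t)\delta_{ij}$, $h_i>0$, satisfying $xP_n=P_{n+1}+\alpha_nP_n+\beta_nP_{n-1}$, $P_{-1}=0$, $\beta_n=h_n/h_{n-1}$, $\mathsf p_1(0,t)=0$. Define $R_n(t)=B\,t^\alpha(1-t)^\beta P_n(t;t)^2/h_n$, $r_n(t)=B\,t^\alpha(1-t)^\beta P_n(t;t)P_{n-1}(t;t)/h_{n-1}$ ($r_0=0$), $x_n(t)=\frac{\beta}{h_n}\int_0^1\frac{P_n(y)^2}{1-y}\,y^\alpha(1-y)^\beta(A+B\theta(y-t))\,dy$, $y_n(t)=\frac{\beta}{h_{n-1}}\int_0^1\frac{P_n(y)P_{n-1}(y)}{1-y}\,y^\alpha(1-y)^\beta(A+B\theta(y-t))\,dy$ ($y_0=0$). *)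

theory Defs
  imports "HOL-Analysis.Analysis" "HOL-Computational_Algebra.Polynomial"
begin

text \<open>Heaviside step function (the value at 0 is irrelevant: a null set).\<close>
definition heav :: "real \<Rightarrow> real" where
  "heav x = (if x \<ge> 0 then 1 else 0)"

definition wt :: "real \<Rightarrow> real \<Rightarrow> real \<Rightarrow> real \<Rightarrow> real \<Rightarrow> real \<Rightarrow> real" where
  "wt a b A B t x = x powr a * (1 - x) powr b * (A + B * heav (x - t))"

definition hn :: "real \<Rightarrow> real \<Rightarrow> real \<Rightarrow> real \<Rightarrow> real \<Rightarrow> (nat \<Rightarrow> real poly) \<Rightarrow> nat \<Rightarrow> real" where
  "hn a b A B t P n = (LBINT x:{0..1}. (poly (P n) x)^2 * wt a b A B t x)"

definition Rn :: "real \<Rightarrow> real \<Rightarrow> real \<Rightarrow> real \<Rightarrow> real \<Rightarrow> (nat \<Rightarrow> real poly) \<Rightarrow> nat \<Rightarrow> real" where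
  "Rn a b A B t P n = B * t powr a * (1 - t) powr b * (poly (P n) t)^2 / hn a b A B t P n"

definition rn :: "real \<Rightarrow> real \<Rightarrow> real \<Rightarrow> real \<Rightarrow> real \<Rightarrow> (nat \<Rightarrow> real poly) \<Rightarrow> nat \<Rightarrow> real" where
  "rn a b A B t P n = (if n = 0 then 0 else
     B * t powr a * (1 - t) powr b * poly (P n) t * poly (P (n - 1)) t / hn a b A B t P (n - 1))"

definition xn :: "real \<Rightarrow> real \<Rightarrow> real \<Rightarrow> real \<Rightarrow> real \<Rightarrow> (nat \<Rightarrow> real poly) \<Rightarrow> nat \<Rightarrow> real" where
  "xn a b A B t P n = b / hn a b A B t P n *
     (LBINT y:{0..1}. (poly (P n) y)^2 / (1 - y) * wt a b A B t y)"

definition yn :: "real \<Rightarrow> real \<Rightarrow> real \<Rightarrow> real \<Rightarrow> real \<Rightarrow> (nat \<Rightarrow> real poly) \<Rightarrow> nat \<Rightarrow> real" where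
  "yn a b A B t P n = (if n = 0 then 0 else b / hn a b A B t P (n - 1) *
     (LBINT y:{0..1}. poly (P n) y * poly (P (n - 1)) y / (1 - y) * wt a b A B t y))"

definition p1 :: "(nat \<Rightarrow> real poly) \<Rightarrow> nat \<Rightarrow> real" where
  "p1 P n = (if n = 0 then 0 else coeff (P n) (n - 1))"

end

theory Submission
  imports Defs
begin


definition u :: "real \<Rightarrow> real \<Rightarrow> real \<Rightarrow> real" where
  "u a b y = y powr a * (1 - y) powr b"

lemma cont_u:
  assumes "a > 0" "b > 0" "0 \<le> c"
  shows "continuous_on {c..1} (\<lambda>y. poly q y * u a b y)"
  unfolding u_def using assms
  by (intro continuous_intros continuous_on_powr') auto

lemma G_deriv:
  fixes a b :: real
  assumes "a > 0" "b > 0" "0 < y" "y < 1"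
  shows "((\<lambda>y. y powr (a+1) * (1 - y) powr b * poly f y) has_real_derivative
     ((a+b+1) * (poly f y * u a b y) + poly ([:0,1:] * pderiv f) y * u a b y
       - b * (poly f y / (1 - y) * u a b y))) (at y)"
proof -
  have d: "((\<lambda>y. y powr (a+1) * (1 - y) powr b * poly f y) has_real_derivative
     ((a+1) * y powr a * (1 - y) powr b * poly f y
      + y powr (a+1) * (- (b * (1 - y) powr (b - 1))) * poly f y
      + y powr (a+1) * (1 - y) powr b * poly (pderiv f) y)) (at y)"
    using assms
    by (auto intro!: derivative_eq_intros simp: algebra_simps)
  have e1: "y powr (a+1) = y * y powr a" using assms by (simp add: powr_add)
  have e2: "(1 - y) powr (b - 1) = (1 - y) powr b / (1 - y)" using assms by (simp add: powr_diff)
  show ?thesis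
    apply (rule DERIV_cong[OF d])
    using assms unfolding e1 e2 u_def
    by (simp add: field_simps)
qed

lemma ibp_hasint:
  fixes a b c :: real
  assumes "a > 0" "b > 0" "0 \<le> c" "c < 1"
  shows "((\<lambda>y. (a+b+1) * (poly f y * u a b y) + poly ([:0,1:] * pderiv f) y * u a b y
       - b * (poly f y / (1 - y) * u a b y)) has_integral
       (- (c powr (a+1) * (1 - c) powr b * poly f c))) {c..1}"
proof -
  have "((\<lambda>y. (a+b+1) * (poly f y * u a b y) + poly ([:0,1:] * pderiv f) y * u a b y
       - b * (poly f y / (1 - y) * u a b y)) has_integral
       ((\<lambda>y. y powr (a+1) * (1 - y) powr b * poly f y) 1 - (\<lambda>y. y powr (a+1) * (1 - y) powr b * poly f y) c)) {c..1}"
  proof (rule fundamental_theorem_of_calculus_interior)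
    show "c \<le> 1" using assms by simp
    show "continuous_on {c..1} (\<lambda>y. y powr (a+1) * (1 - y) powr b * poly f y)"
      using assms by (intro continuous_intros continuous_on_powr') auto
    fix x assume "x \<in> {c<..<1}"
    then show "((\<lambda>y. y powr (a+1) * (1 - y) powr b * poly f y) has_vector_derivative
       ((a+b+1) * (poly f x * u a b x) + poly ([:0,1:] * pderiv f) x * u a b x
       - b * (poly f x / (1 - x) * u a b x))) (at x)"
      using G_deriv[of a b x f] assms
      by (auto simp: has_real_derivative_iff_has_vector_derivative)
  qed
  then show ?thesis by simp
qed



lemma u_nonneg: "0 \<le> y \<Longrightarrow> y \<le> 1 \<Longrightarrow> 0 \<le> u a b y"
  unfolding u_def by simp

lemma int_pu:
  assumes "a > 0" "b > 0" "0 \<le> c"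
  shows "(\<lambda>y. poly q y * u a b y) absolutely_integrable_on {c..1}"
  by (rule absolutely_integrable_continuous_real[OF cont_u[OF assms]])
lemma int_pu1:
  assumes "a > 0" "b > 0" "0 \<le> c" "c < 1"
  shows "(\<lambda>y. poly q y / (1 - y) * u a b y) absolutely_integrable_on {c..1}"
proof -
  have h: "((\<lambda>y. (a+b+1) * (poly 1 y * u a b y) + poly ([:0,1:] * pderiv 1) y * u a b y
       - b * (poly 1 y / (1 - y) * u a b y)) has_integral
       (- (c powr (a+1) * (1 - c) powr b * poly 1 c))) {c..1}"
    by (rule ibp_hasint[OF assms])
  have i1: "(\<lambda>y. (a+b+1) * (poly 1 y * u a b y)) integrable_on {c..1}"
    using int_pu[OF assms(1-3), of 1] assms unfolding absolutely_integrable_on_def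
    by (subst integrable_on_cmult_iff) auto
  have i2: "(\<lambda>y. ((a+b+1) * (poly 1 y * u a b y)) - ((a+b+1) * (poly 1 y * u a b y) + poly ([:0,1:] * pderiv 1) y * u a b y
       - b * (poly 1 y / (1 - y) * u a b y))) integrable_on {c..1}"
    by (rule integrable_diff[OF i1 has_integral_integrable[OF h]])
  have eq: "(\<lambda>y. ((a+b+1) * (poly 1 y * u a b y)) - ((a+b+1) * (poly 1 y * u a b y) + poly ([:0,1:] * pderiv 1) y * u a b y
       - b * (poly 1 y / (1 - y) * u a b y))) = (\<lambda>y. b * (1 / (1 - y) * u a b y))"
    by (rule ext) simp
  have "(\<lambda>y. 1 / (1 - y) * u a b y) integrable_on {c..1}"
    using i2 assms unfolding eq by (subst (asm) integrable_on_cmult_iff) auto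
  then have ai: "(\<lambda>y. 1 / (1 - y) * u a b y) absolutely_integrable_on {c..1}"
    proof (rule nonnegative_absolutely_integrable_1)
    fix y assume "y \<in> {c..1}"
    then show "0 \<le> 1 / (1 - y) * u a b y" using assms u_nonneg[of y a b] by simp
  qed
  have "(\<lambda>y. poly q y * (1 / (1 - y) * u a b y)) absolutely_integrable_on {c..1}"
  proof (rule absolutely_integrable_bounded_measurable_product_real[OF _ _ _ ai])
    show "poly q \<in> borel_measurable (lebesgue_on {c..1})"
      by (intro continuous_imp_measurable_on_sets_lebesgue continuous_intros) auto
    show "{c..1} \<in> sets lebesgue" by simp
    show "bounded (poly q ` {c..1})"
      by (intro compact_imp_bounded compact_continuous_image continuous_intros) auto
  qed
  then show ?thesis by (simp add: field_simps)
qed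





lemma ai_int: "(f::real\<Rightarrow>real) absolutely_integrable_on S \<Longrightarrow> f integrable_on S"
  by (rule set_lebesgue_integral_eq_integral(1))

lemma ibp_id:
  fixes a b c :: real
  assumes "a > 0" "b > 0" "0 \<le> c" "c < 1"
  shows "b * integral {c..1} (\<lambda>y. poly f y / (1 - y) * u a b y)
    = (a+b+1) * integral {c..1} (\<lambda>y. poly f y * u a b y)
      + integral {c..1} (\<lambda>y. poly ([:0,1:] * pderiv f) y * u a b y)
      + c powr (a+1) * (1 - c) powr b * poly f c"
proof -
  note h = ibp_hasint[OF assms, of f]
  have i1: "(\<lambda>y. poly f y * u a b y) integrable_on {c..1}"
    by (rule ai_int[OF int_pu[OF assms(1-3)]])
  have i2: "(\<lambda>y. poly ([:0,1:] * pderiv f) y * u a b y) integrable_on {c..1}"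
    by (rule ai_int[OF int_pu[OF assms(1-3)]])
  have i3: "(\<lambda>y. poly f y / (1 - y) * u a b y) integrable_on {c..1}"
    by (rule ai_int[OF int_pu1[OF assms]])
  have "integral {c..1} (\<lambda>y. (a+b+1) * (poly f y * u a b y) + poly ([:0,1:] * pderiv f) y * u a b y
       - b * (poly f y / (1 - y) * u a b y)) = - (c powr (a+1) * (1 - c) powr b * poly f c)"
    using h by (rule integral_unique)
  note e1 = this
  have j1: "(\<lambda>y. (a+b+1) * (poly f y * u a b y)) integrable_on {c..1}"
    using i1 by (rule integrable_on_mult_right)
  have j3: "(\<lambda>y. b * (poly f y / (1 - y) * u a b y)) integrable_on {c..1}"
    using i3 by (rule integrable_on_mult_right)
  have "integral {c..1} (\<lambda>y. (a+b+1) * (poly f y * u a b y) + poly ([:0,1:] * pderiv f) y * u a b y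
       - b * (poly f y / (1 - y) * u a b y)) = integral {c..1} (\<lambda>y. (a+b+1) * (poly f y * u a b y) + poly ([:0,1:] * pderiv f) y * u a b y)
       - integral {c..1} (\<lambda>y. b * (poly f y / (1 - y) * u a b y))"
    by (rule integral_diff[OF integrable_add[OF j1 i2] j3])
  also have "integral {c..1} (\<lambda>y. (a+b+1) * (poly f y * u a b y) + poly ([:0,1:] * pderiv f) y * u a b y)
     = integral {c..1} (\<lambda>y. (a+b+1) * (poly f y * u a b y)) + integral {c..1} (\<lambda>y. poly ([:0,1:] * pderiv f) y * u a b y)"
    by (rule integral_add[OF j1 i2])
  finally have "integral {c..1} (\<lambda>y. (a+b+1) * (poly f y * u a b y) + poly ([:0,1:] * pderiv f) y * u a b y
       - b * (poly f y / (1 - y) * u a b y)) = (a+b+1) * integral {c..1} (\<lambda>y. poly f y * u a b y)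
      + integral {c..1} (\<lambda>y. poly ([:0,1:] * pderiv f) y * u a b y) - b * integral {c..1} (\<lambda>y. poly f y / (1 - y) * u a b y)"
    by (simp only: integral_mult_right)
  with e1 show ?thesis by linarith
qed




lemma comb:
  fixes g :: "real \<Rightarrow> real"
  assumes "0 \<le> t" "t \<le> 1" and h: "(\<lambda>y. g y * u a b y) absolutely_integrable_on {0..1}"
  shows "(\<lambda>y. g y * wt a b A B t y) absolutely_integrable_on {0..1}"
    "integral {0..1} (\<lambda>y. g y * wt a b A B t y)
      = A * integral {0..1} (\<lambda>y. g y * u a b y) + B * integral {t..1} (\<lambda>y. g y * u a b y)"
proof -
  define h where "h = (\<lambda>y. g y * u a b y)"
  have eqf: "(\<lambda>y. g y * wt a b A B t y) = (\<lambda>y. A * h y + B * (if y \<in> {t..} then h y else 0))"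
    by (rule ext) (auto simp: wt_def heav_def u_def h_def algebra_simps)
  have r1: "h absolutely_integrable_on {t..1}"
    using absolutely_integrable_on_subinterval[OF h[folded h_def]] assms by auto
  have "(\<lambda>y. if y \<in> {t..1} then h y else 0) absolutely_integrable_on UNIV"
    using r1 absolutely_integrable_restrict_UNIV by blast
  moreover have "(\<lambda>y. if y \<in> {0..1} then (if y \<in> {t..} then h y else 0) else 0) = (\<lambda>y. if y \<in> {t..1} then h y else 0)"
    using assms by (intro ext) auto
  ultimately have r2: "(\<lambda>y. if y \<in> {t..} then h y else 0) absolutely_integrable_on {0..1}"
    using absolutely_integrable_restrict_UNIV[of "{0..1}" "\<lambda>y. if y \<in> {t..} then h y else 0"] by simp
  have hh: "h absolutely_integrable_on {0..1}" using h h_def by simp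
  show "(\<lambda>y. g y * wt a b A B t y) absolutely_integrable_on {0..1}"
    unfolding eqf
    by (intro set_integral_add(1) set_integrable_mult_right hh r2)
  have i1: "(\<lambda>y. A * h y) integrable_on {0..1}"
    by (intro integrable_on_mult_right ai_int hh)
  have i2: "(\<lambda>y. B * (if y \<in> {t..} then h y else 0)) integrable_on {0..1}"
    by (intro integrable_on_mult_right ai_int r2)
  have "integral {0..1} (\<lambda>y. g y * wt a b A B t y) = integral {0..1} (\<lambda>y. A * h y) + integral {0..1} (\<lambda>y. B * (if y \<in> {t..} then h y else 0))"
    unfolding eqf by (rule integral_add[OF i1 i2])
  also have "\<dots> = A * integral {0..1} h + B * integral ({t..} \<inter> {0..1}) h"
    by (simp only: integral_mult_right integral_restrict_Int)
  also have "{t..} \<inter> {0..1} = {t..(1::real)}" using assms by auto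
  finally show "integral {0..1} (\<lambda>y. g y * wt a b A B t y)
      = A * integral {0..1} (\<lambda>y. g y * u a b y) + B * integral {t..1} (\<lambda>y. g y * u a b y)"
    by (simp add: h_def)
qed

lemma lb:
  fixes f :: "real \<Rightarrow> real"
  assumes "f absolutely_integrable_on {0..1}" "f \<in> borel_measurable borel"
  shows "(LBINT x:{0..1}. f x) = integral {0..1} f"
proof -
  have m: "(\<lambda>x. indicator {0..1::real} x *\<^sub>R f x) \<in> borel_measurable lborel"
    using assms(2) by measurable
  have "set_integrable lborel {0..1} f"
    using assms(1) integrable_completion[OF m] unfolding set_integrable_def by simp
  then show ?thesis by (rule set_borel_integral_eq_integral(2))
qed

lemma poly_meas[measurable]: "poly (q::real poly) \<in> borel_measurable borel"
  using borel_measurable_continuous_onI[OF continuous_on_poly[OF continuous_on_id, of UNIV q]] by simp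

lemma wt_meas[measurable]: "wt a b A B t \<in> borel_measurable borel"
proof -
  have "(\<lambda>x::real. if 0 \<le> x - t then 1 else (0::real)) \<in> borel_measurable borel"
    by measurable
  moreover have "(\<lambda>x::real. x powr a * (1 - x) powr b) \<in> borel_measurable borel"
    by measurable
  ultimately show ?thesis
    unfolding wt_def heav_def by (intro borel_measurable_times borel_measurable_add) auto
qed

lemma meas1: "(\<lambda>y. poly q y * wt a b A B t y) \<in> borel_measurable borel"
  by measurable

lemma meas2: "(\<lambda>y. poly q y / (1 - y) * wt a b A B t y) \<in> borel_measurable borel"
  by measurable




locale setting =
  fixes a b A B t :: real and P :: "nat \<Rightarrow> real poly"
  assumes apos: "a > 0" and bpos: "b > 0" and Anonneg: "A \<ge> 0" and ABnonneg: "A + B \<ge> 0"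
    and notboth: "\<not> (A = 0 \<and> B = 0)" and tpos: "0 < t" and tlt: "t < 1"
    and monic: "\<forall>k. degree (P k) = k \<and> lead_coeff (P k) = 1"
    and orth: "\<forall>i j. i \<noteq> j \<longrightarrow>
                 (LBINT x:{0..1}. poly (P i) x * poly (P j) x * wt a b A B t x) = 0"
begin

definition I :: "real poly \<Rightarrow> real" where
  "I q = integral {0..1} (\<lambda>y. poly q y * wt a b A B t y)"

definition J :: "real poly \<Rightarrow> real" where
  "J q = integral {0..1} (\<lambda>y. poly q y / (1 - y) * wt a b A B t y)"

lemma WF1: "(\<lambda>y. poly q y * wt a b A B t y) absolutely_integrable_on {0..1}"
  by (rule comb(1)[OF less_imp_le[OF tpos] less_imp_le[OF tlt] int_pu[OF apos bpos order_refl]])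

lemma WF2: "(\<lambda>y. poly q y / (1 - y) * wt a b A B t y) absolutely_integrable_on {0..1}"
  by (rule comb(1)[OF less_imp_le[OF tpos] less_imp_le[OF tlt] int_pu1[OF apos bpos order_refl zero_less_one]])

lemma WF3: "b * J f = (a+b+1) * I f + I ([:0,1:] * pderiv f)
   + B * (t powr (a+1) * (1 - t) powr b * poly f t)"
proof -
  have c1: "J f = A * integral {0..1} (\<lambda>y. poly f y / (1 - y) * u a b y) + B * integral {t..1} (\<lambda>y. poly f y / (1 - y) * u a b y)"
    unfolding J_def
    by (rule comb(2)[OF less_imp_le[OF tpos] less_imp_le[OF tlt] int_pu1[OF apos bpos order_refl zero_less_one]])
  have c2: "I f = A * integral {0..1} (\<lambda>y. poly f y * u a b y) + B * integral {t..1} (\<lambda>y. poly f y * u a b y)"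
    unfolding I_def
    by (rule comb(2)[OF less_imp_le[OF tpos] less_imp_le[OF tlt] int_pu[OF apos bpos order_refl]])
  have c3: "I ([:0,1:] * pderiv f) = A * integral {0..1} (\<lambda>y. poly ([:0,1:] * pderiv f) y * u a b y) + B * integral {t..1} (\<lambda>y. poly ([:0,1:] * pderiv f) y * u a b y)"
    unfolding I_def
    by (rule comb(2)[OF less_imp_le[OF tpos] less_imp_le[OF tlt] int_pu[OF apos bpos order_refl]])
  note d0 = ibp_id[of a b 0 f] 
  note d1 = ibp_id[of a b t f]
  show ?thesis
    using d0 d1 apos bpos tpos tlt unfolding c1 c2 c3 by (simp add: algebra_simps)
qed

end



context setting begin

lemma I_add: "I (p + q) = I p + I q"
proof -
  have "I (p + q) = integral {0..1} (\<lambda>y. poly p y * wt a b A B t y + poly q y * wt a b A B t y)"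
    unfolding I_def by (simp add: algebra_simps)
  also have "\<dots> = I p + I q"
    unfolding I_def by (rule integral_add[OF ai_int[OF WF1] ai_int[OF WF1]])
  finally show ?thesis .
qed

lemma I_smult: "I (smult c p) = c * I p"
  unfolding I_def by (simp add: mult.assoc)

lemma I_diff: "I (p - q) = I p - I q"
  using I_add[of "p - q" q] by simp

lemma I_zero: "I 0 = 0"
  unfolding I_def by simp

lemma LB_I: "(LBINT x:{0..1}. poly q x * wt a b A B t x) = I q"
  unfolding I_def by (rule lb[OF WF1 meas1])

lemma LB_J: "(LBINT x:{0..1}. poly q x / (1 - x) * wt a b A B t x) = J q"
  unfolding J_def by (rule lb[OF WF2 meas2])

lemma orthI: "i \<noteq> j \<Longrightarrow> I (P i * P j) = 0"
  using orth LB_I[of "P i * P j"] by (simp add: mult.assoc)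

lemma orth_low: "m \<le> n \<Longrightarrow> (\<forall>i\<ge>m. coeff q i = 0) \<Longrightarrow> I (P n * q) = 0"
proof (induction m arbitrary: q)
  case 0
  then have "q = 0" by (intro poly_eqI) auto
  then show ?case by (simp add: I_zero)
next
  case (Suc m)
  define q' where "q' = q - smult (coeff q m) (P m)"
  have dm: "degree (P m) = m" "coeff (P m) m = 1" using monic[rule_format, of m] by auto
  have "\<forall>i\<ge>m. coeff q' i = 0"
  proof (intro allI impI)
    fix i assume "m \<le> i"
    show "coeff q' i = 0"
    proof (cases "i = m")
      case True then show ?thesis using dm by (simp add: q'_def)
    next
      case False
      then have "i > m" using \<open>m \<le> i\<close> by simp
      then have "coeff (P m) i = 0" using dm by (simp add: coeff_eq_0)
      moreover have "coeff q i = 0" using Suc.prems \<open>i > m\<close> by auto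
      ultimately show ?thesis by (simp add: q'_def)
    qed
  qed
  then have "I (P n * q') = 0" using Suc by simp
  moreover have "P n * q = P n * q' + smult (coeff q m) (P n * P m)"
    by (simp add: q'_def algebra_simps)
  moreover have "I (P n * P m) = 0" using orthI Suc.prems by simp
  ultimately show ?case by (simp add: I_add I_smult)
qed

end



lemma Kpos:
  fixes p :: "real poly"
  assumes "a > 0" "b > 0" "0 \<le> c" "c < d" "d \<le> 1" "p \<noteq> 0"
  shows "integral {c..d} (\<lambda>y. poly (p * p) y * u a b y) > 0"
proof -
  define f where "f = (\<lambda>y. poly (p * p) y * u a b y)"
  have cf: "continuous_on {c..d} f"
    using continuous_on_subset[OF cont_u[OF assms(1-3), of "p*p"]] assms unfolding f_def by auto
  have fnn: "\<And>y. y \<in> {c..d} \<Longrightarrow> 0 \<le> f y"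
    unfolding f_def using assms u_nonneg by (auto intro!: mult_nonneg_nonneg)
  have intf: "f integrable_on {c..d}"
    using cf integrable_continuous_real by blast
  have ge: "integral {c..d} f \<ge> 0"
    using intf fnn by (rule integral_nonneg)
  have "integral {c..d} f \<noteq> 0"
  proof
    assume z: "integral {c..d} f = 0"
    have hz: "(f has_integral 0) (cbox c d)"
      using integrable_integral[OF intf] z by simp
    have "{c<..<d} \<subseteq> {x. poly p x = 0}"
    proof
      fix x assume x: "x \<in> {c<..<d}"
      have "f x = 0"
        by (rule has_integral_0_cbox_imp_0[of c d f]) (use cf fnn hz x assms in auto)
      moreover have "u a b x > 0" using x assms unfolding u_def by auto
      ultimately show "x \<in> {x. poly p x = 0}" unfolding f_def by simp
    qed
    then have "finite {c<..<d}" using poly_roots_finite[OF assms(6)] finite_subset by blast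
    then show False using infinite_Ioo[OF assms(4)] by simp
  qed
  with ge show ?thesis unfolding f_def by simp
qed

context setting begin

lemma Pnz: "P n \<noteq> 0"
  using monic[rule_format, of n] by auto

lemma hn_I: "hn a b A B t P n = I (P n * P n)"
proof -
  show ?thesis unfolding hn_def power2_eq_square using LB_I[of "P n * P n"] by simp
qed

lemma hpos: "I (P n * P n) > 0"
proof -
  define K0 where "K0 = integral {0..t} (\<lambda>y. poly (P n * P n) y * u a b y)"
  define K1 where "K1 = integral {t..1} (\<lambda>y. poly (P n * P n) y * u a b y)"
  have ai: "(\<lambda>y. poly (P n * P n) y * u a b y) absolutely_integrable_on {0..1}"
    by (rule int_pu[OF apos bpos order_refl])
  have c: "I (P n * P n) = A * integral {0..1} (\<lambda>y. poly (P n * P n) y * u a b y) + B * K1"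
    unfolding I_def K1_def
    by (rule comb(2)[OF less_imp_le[OF tpos] less_imp_le[OF tlt] ai])
  have cmb: "K0 + K1
     = integral {0..1} (\<lambda>y. poly (P n * P n) y * u a b y)"
    unfolding K0_def K1_def by (rule Henstock_Kurzweil_Integration.integral_combine) (use tpos tlt ai_int[OF ai] in auto)
  have "I (P n * P n) = A * (K0 + K1) + B * K1"
    using c by (simp only: cmb)
  then have c2: "I (P n * P n) = A * K0 + (A + B) * K1"
    by (simp add: algebra_simps)
  have k0: "K0 > 0" unfolding K0_def by (rule Kpos[OF apos bpos order_refl tpos less_imp_le[OF tlt] Pnz])
  have k1: "K1 > 0" unfolding K1_def by (rule Kpos[OF apos bpos less_imp_le[OF tpos] tlt order_refl Pnz])
  show ?thesis
  proof (cases "A = 0")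
    case True
    then have "B > 0" using notboth ABnonneg by auto
    then show ?thesis using c2 True k1 by simp
  next
    case False
    then have "A > 0" using Anonneg by simp
    then have "A * K0 > 0" using k0 by simp
    moreover have "(A + B) * K1 \<ge> 0" using ABnonneg k1 by simp
    ultimately show ?thesis using c2 by linarith
  qed
qed

end



lemma coeff_xpd: "coeff ([:0,1:] * pderiv p) i = of_nat i * coeff (p::real poly) i"
  by (cases i) (auto simp: coeff_pderiv)

lemma coeff_x: "coeff ([:0,1:] * p) i = (if i = 0 then 0 else coeff (p::real poly) (i - 1))"
  by (cases i) auto

context setting begin

lemma dg: "degree (P k) = k" "coeff (P k) k = 1"
  using monic[rule_format, of k] by auto

lemma cz: "i > k \<Longrightarrow> coeff (P k) i = 0"
  using dg(1)[of k] by (simp add: coeff_eq_0)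

lemma I_x_self: "I (P n * ([:0,1:] * pderiv (P n))) = of_nat n * I (P n * P n)"
proof -
  define r where "r = [:0,1:] * pderiv (P n) - smult (of_nat n) (P n)"
  have "\<forall>i\<ge>n. coeff r i = 0"
  proof (intro allI impI)
    fix i assume "n \<le> i"
    have cr: "coeff r i = of_nat i * coeff (P n) i - of_nat n * coeff (P n) i"
      unfolding r_def coeff_diff coeff_smult coeff_xpd ..
    consider "i = n" | "i > n" using \<open>n \<le> i\<close> by linarith
    then show "coeff r i = 0"
      using cr by cases (auto simp: cz)
  qed
  then have "I (P n * r) = 0" by (intro orth_low[of n n]) auto
  moreover have "P n * ([:0,1:] * pderiv (P n)) = smult (of_nat n) (P n * P n) + P n * r"
    by (simp add: r_def algebra_simps)
  ultimately show ?thesis by (simp add: I_add I_smult)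
qed

lemma xn_id: "xn a b A B t P n = 2 * real n + 1 + a + b + t * Rn a b A B t P n"
proof -
  define h where "h = I (P n * P n)"
  have hp: "h > 0" unfolding h_def by (rule hpos)
  have xj: "xn a b A B t P n = b / h * J (P n * P n)"
    unfolding xn_def hn_I h_def power2_eq_square using LB_J[of "P n * P n"] by simp
  note w = WF3[of "P n * P n"]
  have eqX: "[:0,1:] * pderiv (P n * P n) = P n * ([:0,1:] * pderiv (P n)) + P n * ([:0,1:] * pderiv (P n))"
    by (simp add: pderiv_mult algebra_simps)
  have e2: "I ([:0,1:] * pderiv (P n * P n)) = 2 * of_nat n * h"
    unfolding eqX I_add I_x_self h_def by simp
  have tp: "t powr (a + 1) = t * t powr a" using tpos by (simp add: powr_add)
  have bj: "b * J (P n * P n) = (a+b+1) * h + 2 * of_nat n * h + B * (t * t powr a * (1 - t) powr b * (poly (P n) t)^2)"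
    using w e2 unfolding h_def[symmetric] tp by (simp add: power2_eq_square)
  have rn: "Rn a b A B t P n = B * t powr a * (1 - t) powr b * (poly (P n) t)^2 / h"
    unfolding Rn_def hn_I h_def ..
  show ?thesis
    unfolding xj rn using bj hp by (simp add: field_simps)
qed

end



context setting begin

lemma p1_id: "p1 P n = - yn a b A B t P n + t * rn a b A B t P n"
proof (cases n)
  case 0
  then show ?thesis by (simp add: p1_def yn_def rn_def)
next
  case (Suc m)
  define c where "c = coeff (P n) m"
  define h where "h = I (P m * P m)"
  have hp: "h > 0" unfolding h_def by (rule hpos)
  have p1c: "p1 P n = c" unfolding p1_def c_def using Suc by simp
  have yj: "yn a b A B t P n = b / h * J (P n * P m)"
    unfolding yn_def hn_I h_def using Suc LB_J[of "P n * P m"] by simp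
  have rnn: "rn a b A B t P n = B * t powr a * (1 - t) powr b * poly (P n) t * poly (P m) t / h"
    unfolding rn_def hn_I h_def using Suc by simp
  note w = WF3[of "P n * P m"]
  have o1: "I (P n * P m) = 0" using orthI Suc by simp
  have o2: "I (P m * P n) = 0" using orthI Suc by simp
  have q1: "I (P n * ([:0,1:] * pderiv (P m))) = 0"
  proof (rule orth_low[of n n])
    show "\<forall>i\<ge>n. coeff ([:0,1:] * pderiv (P m)) i = 0"
    proof (intro allI impI)
      fix i assume "n \<le> i"
      then have "i > m" using Suc by simp
      then show "coeff ([:0,1:] * pderiv (P m)) i = 0"
        unfolding coeff_xpd using cz by simp
    qed
  qed simp
  define r where "r = [:0,1:] * pderiv (P n) - smult (of_nat n) (P n) + smult c (P m)"
  have "\<forall>i\<ge>m. coeff r i = 0"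
  proof (intro allI impI)
    fix i assume "m \<le> i"
    have cr: "coeff r i = of_nat i * coeff (P n) i - of_nat n * coeff (P n) i + c * coeff (P m) i"
      unfolding r_def coeff_diff coeff_add coeff_smult coeff_xpd ..
    consider "i = m" | "i = n" | "i > n" using \<open>m \<le> i\<close> Suc by linarith
    then show "coeff r i = 0"
    proof cases
      case 1 then show ?thesis using cr Suc dg(2)[of m] by (simp add: c_def algebra_simps)
    next
      case 2 then show ?thesis using cr Suc cz[of m i] dg(2)[of n] by simp
    next
      case 3 then show ?thesis using cr Suc cz[of m i] cz[of n i] by simp
    qed
  qed
  then have q2: "I (P m * r) = 0" by (intro orth_low[of m m]) auto
  have "[:0,1:] * pderiv (P n) = smult (of_nat n) (P n) - smult c (P m) + r"
    by (simp add: r_def)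
  then have q3: "I (P m * ([:0,1:] * pderiv (P n))) = - c * h"
  proof -
    assume e: "[:0,1:] * pderiv (P n) = smult (of_nat n) (P n) - smult c (P m) + r"
    have "P m * ([:0,1:] * pderiv (P n)) = smult (of_nat n) (P m * P n) - smult c (P m * P m) + P m * r"
      unfolding e by (simp add: algebra_simps)
    then show ?thesis
      using o2 q2 by (simp add: I_add I_diff I_smult h_def)
  qed
  have eqX: "[:0,1:] * pderiv (P n * P m) = P m * ([:0,1:] * pderiv (P n)) + P n * ([:0,1:] * pderiv (P m))"
    by (simp add: pderiv_mult algebra_simps)
  have e2: "I ([:0,1:] * pderiv (P n * P m)) = - c * h"
    unfolding eqX I_add q1 q3 by simp
  have tp: "t powr (a + 1) = t * t powr a" using tpos by (simp add: powr_add)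
  have bj: "b * J (P n * P m) = - c * h + B * (t * t powr a * (1 - t) powr b * (poly (P n) t * poly (P m) t))"
    using w e2 o1 unfolding tp by simp
  show ?thesis
    unfolding p1c yj rnn using bj hp by (simp add: field_simps)
qed

lemma al_p1:
  assumes recur: "\<forall>k. [:0, 1:] * P k = P (Suc k) + smult (al k) (P k)
                    + smult (be k) (if k = 0 then 0 else P (k - 1))"
  shows "al n = p1 P n - p1 P (n + 1)"
proof -
  have "coeff ([:0, 1:] * P n) n = coeff (P (Suc n) + smult (al n) (P n)
                    + smult (be n) (if n = 0 then 0 else P (n - 1))) n"
    using recur by simp
  moreover have "coeff ([:0, 1:] * P n) n = p1 P n"
    unfolding coeff_x p1_def by simp
  moreover have "coeff (if n = 0 then 0 else P (n - 1)) n = 0"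
    using cz[of "n - 1" n] by auto
  moreover have "coeff (P (Suc n)) n = p1 P (n + 1)" unfolding p1_def by simp
  ultimately show ?thesis using dg(2)[of n] by simp
qed

end

theorem lemma3p1:
  fixes a b A B t :: real and P :: "nat \<Rightarrow> real poly"
    and al be :: "nat \<Rightarrow> real" and n :: nat
  assumes "a > 0" and "b > 0" and "A \<ge> 0" and "A + B \<ge> 0" and "\<not> (A = 0 \<and> B = 0)"
    and "0 < t" and "t < 1"
    and monic: "\<forall>k. degree (P k) = k \<and> lead_coeff (P k) = 1"
    and orth: "\<forall>i j. i \<noteq> j \<longrightarrow>
                 (LBINT x:{0..1}. poly (P i) x * poly (P j) x * wt a b A B t x) = 0"
    and recur: "\<forall>k. [:0, 1:] * P k = P (Suc k) + smult (al k) (P k)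
                    + smult (be k) (if k = 0 then 0 else P (k - 1))"
  shows "xn a b A B t P n = 2 * real n + 1 + a + b + t * Rn a b A B t P n
    \<and> al n = yn a b A B t P (n + 1) - yn a b A B t P n
                + t * (rn a b A B t P n - rn a b A B t P (n + 1))
    \<and> p1 P n = - yn a b A B t P n + t * rn a b A B t P n"
proof -
  interpret setting a b A B t P
    unfolding setting_def using assms(1-9) by blast
  have "al n = p1 P n - p1 P (n + 1)" by (rule al_p1[OF recur])
  then show ?thesis
    using xn_id[of n] p1_id[of n] p1_id[of "n+1"] by (simp add: algebra_simps)
qed


end
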